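(* Let $n\ge 2$ and let $\mathcal D^{hyp}$ be the labeled Rauzy diagram of the labeled permutation $$\tau_n=\begin{pmatrix}0&2&3&\cdots&n-1&n\\ n&n-1&\cdots&3&2&0\end{pmatrix}$$ on the alphabet $\{0,2,3,\dots,n\}$. Let $\gamma$ be a closed oriented path in $\mathcal D^{hyp}$. If $\gamma$ contains an edge $\pi\xrightarrow{\alpha,\beta}\pi'$ with $\pi\neq\pi'$, then there is a letter $\beta'$ such that $\gamma$ also contains an edge $\pi'\xrightarrow{\alpha,\beta'}\pi''$ (starting at $\pi'$ with the same winner $\alpha$).
   Context: A labeled permutation on an alphabet $\mathcal A$ with $d$ letters is a pair $(\pi_t,\pi_b)$ of bijections $\mathcal A\to\{1,\dots,d\}$, written as a two-row array whose top (bottom) row lists $\pi_t^{-1}(1),\dots,\pi_t^{-1}(d)$ ($\pi_b^{-1}(1),\dots,\pi_b^{-1}(d)$). The Rauzy move $\mathcal R_t$ keeps the top row and, in the bottom row, moves the last letter $\pi_b^{-1}(d)$ to the position immediately to the right of the letter $\pi_t^{-1}(d)$; its winner is $\pi_t^{-1}(d)$, its loser $\pi_b^{-1}(d)$. The move $\mathcal R_b$ is symmetric (keeps the bottom row, moves $\pi_t^{-1}(d)$ in the top row to immediately right of $\pi_b^{-1}(d)$); winner $\pi_b^{-1}(d)$, loser $\pi_t^{-1}(d)$. The labeled Rauzy diagram of $\pi$ is the directed graph of all labeled permutations reachable from $\pi$ by Rauzy moves, with edges $\pi\xrightarrow{\alpha,\beta}\pi'$ for moves with winner $\alpha$ and loser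 $\beta$. *)

theory Defs
  imports Main
begin

text \<open>A labeled permutation is represented by its two-row array:
  a pair (top row, bottom row) of lists of letters, where each row lists
  every letter of the alphabet exactly once.\<close>

type_synonym 'a lperm = "'a list \<times> 'a list"

definition insert_after :: "'a \<Rightarrow> 'a \<Rightarrow> 'a list \<Rightarrow> 'a list" where
  "insert_after a b xs = takeWhile (\<lambda>x. x \<noteq> a) xs @ take 1 (dropWhile (\<lambda>x. x \<noteq> a) xs)
                         @ [b] @ drop 1 (dropWhile (\<lambda>x. x \<noteq> a) xs)"

definition rauzy_t :: "'a lperm \<Rightarrow> 'a lperm" where
  "rauzy_t p = (let (t, b) = p in (t, insert_after (last t) (last b) (butlast b)))"

definition rauzy_b :: "'a lperm \<Rightarrow> 'a lperm" where
  "rauzy_b p = (let (t, b) = p in (insert_after (last b) (last t) (butlast t), b))"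

text \<open>Labeled edges (pi, winner, loser, pi') produced by Rauzy moves.\<close>
definition rauzy_edge :: "'a lperm \<Rightarrow> 'a \<Rightarrow> 'a \<Rightarrow> 'a lperm \<Rightarrow> bool" where
  "rauzy_edge p \<alpha> \<beta> q \<longleftrightarrow>
     (q = rauzy_t p \<and> \<alpha> = last (fst p) \<and> \<beta> = last (snd p)) \<or>
     (q = rauzy_b p \<and> \<alpha> = last (snd p) \<and> \<beta> = last (fst p))"

definition rauzy_vertices :: "'a lperm \<Rightarrow> 'a lperm set" where
  "rauzy_vertices p0 = {q. (\<lambda>x y. y = rauzy_t x \<or> y = rauzy_b x)\<^sup>*\<^sup>* p0 q}"

definition rauzy_diagram_edges :: "'a lperm \<Rightarrow> ('a lperm \<times> 'a \<times> 'a \<times> 'a lperm) set" where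
  "rauzy_diagram_edges p0 =
     {(p, \<alpha>, \<beta>, q). p \<in> rauzy_vertices p0 \<and> rauzy_edge p \<alpha> \<beta> q}"

definition closed_path :: "'a lperm \<Rightarrow> ('a lperm \<times> 'a \<times> 'a \<times> 'a lperm) list \<Rightarrow> bool" where
  "closed_path p0 \<gamma> \<longleftrightarrow>
     \<gamma> \<noteq> [] \<and> set \<gamma> \<subseteq> rauzy_diagram_edges p0 \<and>
     (\<forall>i. Suc i < length \<gamma> \<longrightarrow> snd (snd (snd (\<gamma> ! i))) = fst (\<gamma> ! Suc i)) \<and>
     snd (snd (snd (last \<gamma>))) = fst (hd \<gamma>)"

definition tau :: "nat \<Rightarrow> nat lperm" where
  "tau n = (0 # [2..<n+1], rev (0 # [2..<n+1]))"

end

theory Submission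
  imports Defs
begin

lemma ia_Nil[simp]: "insert_after a c [] = [c]"
  by (simp add: insert_after_def)
lemma ia_Cons[simp]: "insert_after a c (x#xs) = (if x = a then x # c # xs else x # insert_after a c xs)"
  by (simp add: insert_after_def)
lemma ia_append: "a \<notin> set xs \<Longrightarrow> insert_after a c (xs @ ys) = xs @ insert_after a c ys"
  by (induction xs) auto

definition tauL :: "'a list \<Rightarrow> 'a lperm" where "tauL m = (m, rev m)"
definition Et :: "'a list \<Rightarrow> 'a lperm \<Rightarrow> 'a lperm" where
  "Et F x = (F @ fst x, hd (snd x) # rev F @ tl (snd x))"
definition Eb :: "'a list \<Rightarrow> 'a lperm \<Rightarrow> 'a lperm" where
  "Eb F x = (hd (fst x) # F @ tl (fst x), rev F @ snd x)"

lemma rt_simp: "rauzy_t (t,b) = (t, insert_after (last t) (last b) (butlast b))"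
  by (simp add: rauzy_t_def)
lemma rb_simp: "rauzy_b (t,b) = (insert_after (last b) (last t) (butlast t), b)"
  by (simp add: rauzy_b_def)

lemma C1: "t \<noteq> [] \<Longrightarrow> bs \<noteq> [] \<Longrightarrow> last t \<noteq> h \<Longrightarrow> last t \<notin> set F \<Longrightarrow>
  rauzy_t (Et F (t, h # bs)) = Et F (rauzy_t (t, h # bs))"
  by (simp add: Et_def rt_simp butlast_append ia_append)

lemma C2: "t \<noteq> [] \<Longrightarrow> bs \<noteq> [] \<Longrightarrow> last bs \<notin> set F \<Longrightarrow>
  rauzy_b (Et F (t, h # bs)) = Et F (rauzy_b (t, h # bs))"
  by (simp add: Et_def rb_simp butlast_append ia_append)

lemma C3: "ts \<noteq> [] \<Longrightarrow> b \<noteq> [] \<Longrightarrow> last ts \<notin> set F \<Longrightarrow>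
  rauzy_t (Eb F (h # ts, b)) = Eb F (rauzy_t (h # ts, b))"
  by (simp add: Eb_def rt_simp butlast_append ia_append)

lemma C4: "ts \<noteq> [] \<Longrightarrow> b \<noteq> [] \<Longrightarrow> last b \<noteq> h \<Longrightarrow> last b \<notin> set F \<Longrightarrow>
  rauzy_b (Eb F (h # ts, b)) = Eb F (rauzy_b (h # ts, b))"
  by (simp add: Eb_def rb_simp butlast_append ia_append)

lemma S1: "rauzy_t (Et F (tauL (h # m2 @ [l]))) = Et (F @ [h]) (tauL (m2 @ [l]))"
  by (simp add: Et_def tauL_def rt_simp butlast_append)

lemma S2: "rauzy_b (Eb F (tauL (f # m2 @ [h]))) = Eb (h # F) (tauL (f # m2))"
  by (simp add: Eb_def tauL_def rb_simp butlast_append)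

lemma Et_Nil_tau: "Et [] (tauL m) = tauL m" if "m \<noteq> []"
  using that by (simp add: Et_def tauL_def)
lemma Eb_Nil_tau: "Eb [] (tauL m) = tauL m" if "m \<noteq> []"
  using that by (simp add: Eb_def tauL_def)
lemma Et_single: "Et G (tauL [l]) = tauL (G @ [l])"
  by (simp add: Et_def tauL_def)
lemma Eb_single: "Eb G (tauL [f]) = tauL (f # G)"
  by (simp add: Eb_def tauL_def)



inductive TT and BB :: "'a list \<Rightarrow> 'a lperm \<Rightarrow> bool" where
  Tbase: "length m \<ge> 2 \<Longrightarrow> TT m (tauL m)"
| Tstep: "BB m x \<Longrightarrow> F \<noteq> [] \<Longrightarrow> TT (F @ m) (Et F x)"
| Bbase: "length m \<ge> 2 \<Longrightarrow> BB m (tauL m)"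
| Bstep: "TT m x \<Longrightarrow> F \<noteq> [] \<Longrightarrow> BB (m @ F) (Eb F x)"

definition nice :: "'a list \<Rightarrow> 'a lperm \<Rightarrow> bool" where
  "nice m x \<longleftrightarrow> distinct (fst x) \<and> distinct (snd x) \<and> set (fst x) = set m \<and> set (snd x) = set m
     \<and> length (fst x) = length m \<and> length (snd x) = length m \<and> 2 \<le> length m
     \<and> hd (fst x) = hd m \<and> hd (snd x) = last m \<and> last (fst x) \<noteq> last (snd x)"

lemma shape:
  shows "TT m x \<Longrightarrow> distinct m \<Longrightarrow> nice m x \<and> (x = tauL m \<longleftrightarrow> last (snd x) = hd (fst x))"
    and "BB m x \<Longrightarrow> distinct m \<Longrightarrow> nice m x \<and> (x = tauL m \<longleftrightarrow> last (fst x) = hd (snd x))"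
proof (induction rule: TT_BB.inducts)
  case (Tbase m)
  then show ?case
    by (cases m) (auto simp: nice_def tauL_def hd_rev last_rev distinct_length_2_or_more)
next
  case (Tstep m x F)
  obtain t b where x: "x = (t,b)" by fastforce
  from Tstep x have n: "nice m (t,b)" by auto
  have "length b \<ge> 2" using n by (simp add: nice_def)
  then obtain h bs where b: "b = h # bs" and bs: "bs \<noteq> []"
    by (cases b) (auto simp: Suc_le_eq)
  have tne: "t \<noteq> []" using n by (auto simp: nice_def)
  have lb: "last bs \<in> set m" using n b bs by (auto simp: nice_def)
  have lt: "last t \<in> set m" using n tne by (auto simp: nice_def)
  have dF: "set F \<inter> set m = {}" "distinct F" using Tstep by auto
  have "nice (F @ m) (Et F x)"
    using n x b bs tne dF Tstep(4) unfolding nice_def Et_def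
    by (auto simp: last_append hd_append)
  moreover have "Et F x \<noteq> tauL (F @ m)"
  proof
    assume "Et F x = tauL (F @ m)"
    hence "h # rev F @ bs = rev m @ rev F" using x b by (simp add: Et_def tauL_def)
    hence "last (h # rev F @ bs) = last (rev m @ rev F)" by simp
    hence "last bs = hd F" using bs \<open>F \<noteq> []\<close> by (simp add: last_rev)
    thus False using lb dF \<open>F \<noteq> []\<close> by (cases F) auto
  qed
  moreover have "last (snd (Et F x)) \<noteq> hd (fst (Et F x))"
    using x b bs lb dF \<open>F \<noteq> []\<close> by (cases F) (auto simp: Et_def)
  ultimately show ?case by simp
next
  case (Bbase m)
  then show ?case
    by (cases m) (auto simp: nice_def tauL_def hd_rev last_rev distinct_length_2_or_more)
next
  case (Bstep m x F)
  obtain t b where x: "x = (t,b)" by fastforce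
  from Bstep x have n: "nice m (t,b)" by auto
  have "length t \<ge> 2" using n by (simp add: nice_def)
  then obtain h ts where t: "t = h # ts" and ts: "ts \<noteq> []"
    by (cases t) (auto simp: Suc_le_eq)
  have bne: "b \<noteq> []" using n by (auto simp: nice_def)
  have lt: "last ts \<in> set m" using n t ts by (auto simp: nice_def)
  have lb: "last b \<in> set m" using n bne by (auto simp: nice_def)
  have dF: "set F \<inter> set m = {}" "distinct F" using Bstep by auto
  have "nice (m @ F) (Eb F x)"
    using n x t ts bne dF Bstep(4) unfolding nice_def Eb_def
    by (auto simp: last_append hd_append hd_rev)
  moreover have "Eb F x \<noteq> tauL (m @ F)"
  proof
    assume "Eb F x = tauL (m @ F)"
    hence "h # F @ ts = m @ F" using x t by (simp add: Eb_def tauL_def)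
    hence "last (h # F @ ts) = last (m @ F)" by simp
    hence "last ts = last F" using ts \<open>F \<noteq> []\<close> by simp
    thus False using lt dF \<open>F \<noteq> []\<close> by (cases F rule: rev_cases) auto
  qed
  moreover have "last (fst (Eb F x)) \<noteq> hd (snd (Eb F x))"
    using x t ts lt dF \<open>F \<noteq> []\<close> by (cases F rule: rev_cases) (auto simp: Eb_def)
  ultimately show ?case by simp
qed



lemma C1': assumes "BB m x" "distinct (F@m)" "x \<noteq> tauL m"
  shows "rauzy_t (Et F x) = Et F (rauzy_t x)"
proof -
  obtain t b where x: "x = (t,b)" by fastforce
  have n: "nice m (t,b)" and r: "last t \<noteq> hd b" using shape(2)[OF assms(1)] assms x by auto
  have "length b \<ge> 2" using n by (simp add: nice_def)
  then obtain h bs where b: "b = h # bs" and bs: "bs \<noteq> []"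
    by (cases b) (auto simp: Suc_le_eq)
  have tne: "t \<noteq> []" using n by (auto simp: nice_def)
  have "last t \<in> set m" using n last_in_set[OF tne] by (simp add: nice_def)
  note tne this
  then show ?thesis using C1[of t bs h F] x b bs r assms(2) by auto
qed

lemma C2': assumes "BB m x" "distinct (F@m)"
  shows "rauzy_b (Et F x) = Et F (rauzy_b x)"
proof -
  obtain t b where x: "x = (t,b)" by fastforce
  have n: "nice m (t,b)" using shape(2)[OF assms(1)] assms x by auto
  have "length b \<ge> 2" using n by (simp add: nice_def)
  then obtain h bs where b: "b = h # bs" and bs: "bs \<noteq> []"
    by (cases b) (auto simp: Suc_le_eq)
  have "t \<noteq> []" "last bs \<in> set m" using n b bs by (auto simp: nice_def)
  then show ?thesis using C2[of t bs F h] x b bs assms(2) by auto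
qed

lemma C3': assumes "TT m x" "distinct (m@F)"
  shows "rauzy_t (Eb F x) = Eb F (rauzy_t x)"
proof -
  obtain t b where x: "x = (t,b)" by fastforce
  have n: "nice m (t,b)" using shape(1)[OF assms(1)] assms x by auto
  have "length t \<ge> 2" using n by (simp add: nice_def)
  then obtain h ts where t: "t = h # ts" and ts: "ts \<noteq> []"
    by (cases t) (auto simp: Suc_le_eq)
  have "b \<noteq> []" "last ts \<in> set m" using n t ts by (auto simp: nice_def)
  then show ?thesis using C3[of ts b F h] x t ts assms(2) by auto
qed

lemma C4': assumes "TT m x" "distinct (m@F)" "x \<noteq> tauL m"
  shows "rauzy_b (Eb F x) = Eb F (rauzy_b x)"
proof -
  obtain t b where x: "x = (t,b)" by fastforce
  have n: "nice m (t,b)" and r: "last b \<noteq> hd t" using shape(1)[OF assms(1)] assms x by auto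
  have "length t \<ge> 2" using n by (simp add: nice_def)
  then obtain h ts where t: "t = h # ts" and ts: "ts \<noteq> []"
    by (cases t) (auto simp: Suc_le_eq)
  have bne: "b \<noteq> []" using n by (auto simp: nice_def)
  have "last b \<in> set m" using n last_in_set[OF bne] by (simp add: nice_def)
  note bne this
  then show ?thesis using C4[of ts b h F] x t ts r assms(2) by auto
qed

lemma rt_tau: "m1 \<noteq> [] \<Longrightarrow> rauzy_t (Et F (tauL (h # m1))) = Et (F@[h]) (tauL m1)"
  by (cases m1 rule: rev_cases) (auto simp: S1)

lemma rb_tau: "m1 \<noteq> [] \<Longrightarrow> rauzy_b (Eb F (tauL (m1 @ [h]))) = Eb (h # F) (tauL m1)"
  by (cases m1) (auto simp: S2)

lemma TT_len: "TT m x \<Longrightarrow> 2 \<le> length m" and BB_len: "BB m x \<Longrightarrow> 2 \<le> length m"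
  by (induction rule: TT_BB.inducts) auto

lemma TT_tau_step: "BB m1 (tauL m1) \<Longrightarrow> TT ([h] @ m1) (Et [h] (tauL m1))"
  by (rule Tstep) auto

lemma Et_ne_tau: assumes "BB m x" "distinct (F@m)" "F \<noteq> []"
  shows "Et F x \<noteq> tauL (F@m)"
proof
  assume eq: "Et F x = tauL (F @ m)"
  obtain t b where x: "x = (t,b)" by fastforce
  have n: "nice m (t,b)" using shape(2)[OF assms(1)] assms x by auto
  have "length b \<ge> 2" using n by (simp add: nice_def)
  then obtain h bs where b: "b = h # bs" and bs: "bs \<noteq> []"
    by (cases b) (auto simp: Suc_le_eq)
  have lb: "last bs \<in> set m" using n b bs by (auto simp: nice_def)
  have "h # rev F @ bs = rev m @ rev F" using eq x b by (simp add: Et_def tauL_def)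
  hence "last (h # rev F @ bs) = last (rev m @ rev F)" by simp
  hence "last bs = hd F" using bs assms(3) by (simp add: last_rev)
  thus False using lb assms by (cases F) auto
qed

lemma Eb_ne_tau: assumes "TT m x" "distinct (m@F)" "F \<noteq> []"
  shows "Eb F x \<noteq> tauL (m@F)"
proof
  assume eq: "Eb F x = tauL (m@F)"
  obtain t b where x: "x = (t,b)" by fastforce
  have n: "nice m (t,b)" using shape(1)[OF assms(1)] assms x by auto
  have "length t \<ge> 2" using n by (simp add: nice_def)
  then obtain h ts where t: "t = h # ts" and ts: "ts \<noteq> []"
    by (cases t) (auto simp: Suc_le_eq)
  have lt: "last ts \<in> set m" using n t ts by (auto simp: nice_def)
  have "h # F @ ts = m @ F" using eq x t by (simp add: Eb_def tauL_def)
  hence "last (h # F @ ts) = last (m @ F)" by simp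
  hence "last ts = last F" using ts assms(3) by simp
  thus False using lt assms by (cases F rule: rev_cases) auto
qed

lemma closure:
  shows "TT m x \<Longrightarrow> distinct m \<Longrightarrow> TT m (rauzy_t x) \<and> (x \<noteq> tauL m \<longrightarrow> TT m (rauzy_b x))"
    and "BB m x \<Longrightarrow> distinct m \<Longrightarrow> BB m (rauzy_b x) \<and> (x \<noteq> tauL m \<longrightarrow> BB m (rauzy_t x))"
proof (induction rule: TT_BB.inducts)
  case (Tbase m)
  then obtain h m1 where m: "m = h # m1" "m1 \<noteq> []" by (cases m) (auto simp: Suc_le_eq)
  have "rauzy_t (tauL m) = Et [h] (tauL m1)"
    using rt_tau[OF m(2), of "[]" h] m Et_Nil_tau[of m] by simp
  moreover have "TT m (Et [h] (tauL m1))"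
  proof (cases "length m1 \<ge> 2")
    case True
    then show ?thesis using TT_BB.Tstep[OF TT_BB.Bbase[OF True], of "[h]"] m by simp
  next
    case False
    then obtain l where "m1 = [l]" using m by (cases m1) (auto simp: Suc_le_eq)
    then show ?thesis using TT_BB.Tbase[of m] m by (simp add: Et_single)
  qed
  ultimately show ?case by simp
next
  case (Tstep m x F)
  have d: "distinct (F @ m)" by fact
  have dm: "distinct m" using d by simp
  have rt: "TT (F@m) (rauzy_t (Et F x))"
  proof (cases "x = tauL m")
    case True
    obtain h m1 where m: "m = h # m1" "m1 \<noteq> []" using BB_len[OF Tstep(1)] by (cases m) (auto simp: Suc_le_eq)
    have e: "rauzy_t (Et F x) = Et (F@[h]) (tauL m1)" using rt_tau[OF m(2)] True m by simp
    show ?thesis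
    proof (cases "length m1 \<ge> 2")
      case True
      then show ?thesis using e TT_BB.Tstep[OF TT_BB.Bbase[OF True], of "F@[h]"] m by simp
    next
      case False
      then obtain l where "m1 = [l]" using m by (cases m1) (auto simp: Suc_le_eq)
      then show ?thesis using e TT_BB.Tbase[of "F@m"] m by (simp add: Et_single)
    qed
  next
    case False
    then show ?thesis using C1'[OF Tstep(1) d False] Tstep.IH dm TT_BB.Tstep[OF _ \<open>F \<noteq> []\<close>] by auto
  qed
  moreover have "TT (F@m) (rauzy_b (Et F x))"
    using C2'[OF Tstep(1) d] Tstep.IH dm TT_BB.Tstep[OF _ \<open>F \<noteq> []\<close>] by auto
  ultimately show ?case by simp
next
  case (Bbase m)
  then obtain h m1 where m: "m = m1 @ [h]" "m1 \<noteq> []" by (cases m rule: rev_cases) (auto simp: Suc_le_eq)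
  have "rauzy_b (tauL m) = Eb [h] (tauL m1)"
    using rb_tau[OF m(2), of "[]" h] m Eb_Nil_tau[of m] by simp
  moreover have "BB m (Eb [h] (tauL m1))"
  proof (cases "length m1 \<ge> 2")
    case True
    then show ?thesis using TT_BB.Bstep[OF TT_BB.Tbase[OF True], of "[h]"] m by simp
  next
    case False
    then obtain l where "m1 = [l]" using m by (cases m1) (auto simp: Suc_le_eq)
    then show ?thesis using TT_BB.Bbase[of m] m by (simp add: Eb_single)
  qed
  ultimately show ?case by simp
next
  case (Bstep m x F)
  have d: "distinct (m @ F)" by fact
  have dm: "distinct m" using d by simp
  have rb: "BB (m@F) (rauzy_b (Eb F x))"
  proof (cases "x = tauL m")
    case True
    obtain h m1 where m: "m = m1 @ [h]" "m1 \<noteq> []" using TT_len[OF Bstep(1)]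
      by (cases m rule: rev_cases) (auto simp: Suc_le_eq)
    have e: "rauzy_b (Eb F x) = Eb (h#F) (tauL m1)" using rb_tau[OF m(2)] True m by simp
    show ?thesis
    proof (cases "length m1 \<ge> 2")
      case True
      then show ?thesis using e TT_BB.Bstep[OF TT_BB.Tbase[OF True], of "h#F"] m by simp
    next
      case False
      then obtain l where "m1 = [l]" using m by (cases m1) (auto simp: Suc_le_eq)
      then show ?thesis using e TT_BB.Bbase[of "m@F"] m by (simp add: Eb_single)
    qed
  next
    case False
    then show ?thesis using C4'[OF Bstep(1) d False] Bstep.IH dm TT_BB.Bstep[OF _ \<open>F \<noteq> []\<close>] by auto
  qed
  moreover have "BB (m@F) (rauzy_t (Eb F x))"
    using C3'[OF Bstep(1) d] Bstep.IH dm TT_BB.Bstep[OF _ \<open>F \<noteq> []\<close>] by auto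
  ultimately show ?case by simp
qed



lemma TT_tau: "2 \<le> length m \<Longrightarrow> TT m (tauL m)" by (rule TT_BB.Tbase)
lemma BB_tau: "2 \<le> length m \<Longrightarrow> BB m (tauL m)" by (rule TT_BB.Bbase)

lemma TT_Et_tau: "2 \<le> length m \<Longrightarrow> TT (G @ m) (Et G (tauL m))"
proof -
  assume a: "2 \<le> length m"
  hence "m \<noteq> []" by auto
  thus ?thesis using a by (cases "G = []") (auto simp: Et_Nil_tau intro: TT_BB.intros)
qed
lemma BB_Eb_tau: "2 \<le> length m \<Longrightarrow> BB (m @ G) (Eb G (tauL m))"
proof -
  assume a: "2 \<le> length m"
  hence "m \<noteq> []" by auto
  thus ?thesis using a by (cases "G = []") (auto simp: Eb_Nil_tau intro: TT_BB.intros)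
qed

lemma preds:
  shows "TT m y \<Longrightarrow> distinct m \<Longrightarrow> (\<exists>z. TT m z \<and> rauzy_t z = y) \<and>
            (y \<noteq> tauL m \<longrightarrow> (\<exists>z. TT m z \<and> z \<noteq> tauL m \<and> rauzy_b z = y))"
    and "BB m y \<Longrightarrow> distinct m \<Longrightarrow> (\<exists>z. BB m z \<and> rauzy_b z = y) \<and>
            (y \<noteq> tauL m \<longrightarrow> (\<exists>z. BB m z \<and> z \<noteq> tauL m \<and> rauzy_t z = y))"
proof (induction rule: TT_BB.inducts)
  case (Tbase m)
  have "m \<noteq> []" using Tbase by auto
  then obtain m0 c where m0: "m = m0 @ [c]" by (cases m rule: rev_cases) auto
  have "m0 \<noteq> []" using Tbase m0 by auto
  then obtain G a where "m0 = G @ [a]" by (cases m0 rule: rev_cases) auto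
  hence m: "m = G @ [a,c]" using m0 by simp
  have "rauzy_t (Et G (tauL [a,c])) = tauL m"
    using rt_tau[of "[c]" G a] m by (simp add: Et_single)
  moreover have "TT m (Et G (tauL [a,c]))" using TT_Et_tau[of "[a,c]" G] m by simp
  ultimately show ?case by blast
next
  case (Tstep m x F)
  have d: "distinct (F @ m)" by fact
  have dm: "distinct m" using d by simp
  have lm: "2 \<le> length m" using BB_len[OF Tstep(1)] .
  have rt: "\<exists>z. TT (F@m) z \<and> rauzy_t z = Et F x"
  proof (cases "x = tauL m")
    case True
    obtain G f where F: "F = G @ [f]" using \<open>F \<noteq> []\<close> by (cases F rule: rev_cases) auto
    have "rauzy_t (Et G (tauL (f # m))) = Et F x" using rt_tau[of m G f] lm True F by (cases m) auto
    moreover have "TT (F@m) (Et G (tauL (f # m)))" using TT_Et_tau[of "f # m" G] lm F by simp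
    ultimately show ?thesis by blast
  next
    case False
    then obtain z' where z': "BB m z'" "z' \<noteq> tauL m" "rauzy_t z' = x" using Tstep.IH dm by blast
    have "rauzy_t (Et F z') = Et F x" using C1'[OF z'(1) d z'(2)] z'(3) by simp
    moreover have "TT (F@m) (Et F z')" using z'(1) \<open>F \<noteq> []\<close> by (rule TT_BB.Tstep)
    ultimately show ?thesis by blast
  qed
  obtain z' where z': "BB m z'" "rauzy_b z' = x" using Tstep.IH dm by blast
  have "rauzy_b (Et F z') = Et F x" using C2'[OF z'(1) d] z'(2) by simp
  moreover have "TT (F@m) (Et F z')" using z'(1) \<open>F \<noteq> []\<close> by (rule TT_BB.Tstep)
  moreover have "Et F z' \<noteq> tauL (F@m)" using Et_ne_tau[OF z'(1) d \<open>F \<noteq> []\<close>] .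
  ultimately show ?case using rt by blast
next
  case (Bbase m)
  obtain G a c where m: "m = a # c # G"
    using Bbase by (cases m; cases "tl m") (auto simp: Suc_le_eq)
  have "rauzy_b (Eb G (tauL [a,c])) = tauL m"
    using rb_tau[of "[a]" G c] m by (simp add: Eb_single)
  moreover have "BB m (Eb G (tauL [a,c]))" using BB_Eb_tau[of "[a,c]" G] m by simp
  ultimately show ?case by blast
next
  case (Bstep m x F)
  have d: "distinct (m @ F)" by fact
  have dm: "distinct m" using d by simp
  have lm: "2 \<le> length m" using TT_len[OF Bstep(1)] .
  have rb: "\<exists>z. BB (m@F) z \<and> rauzy_b z = Eb F x"
  proof (cases "x = tauL m")
    case True
    obtain G f where F: "F = f # G" using \<open>F \<noteq> []\<close> by (cases F) auto
    have "rauzy_b (Eb G (tauL (m @ [f]))) = Eb F x" using rb_tau[of m G f] lm True F by (cases m) auto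
    moreover have "BB (m@F) (Eb G (tauL (m @ [f])))" using BB_Eb_tau[of "m @ [f]" G] lm F by simp
    ultimately show ?thesis by blast
  next
    case False
    then obtain z' where z': "TT m z'" "z' \<noteq> tauL m" "rauzy_b z' = x" using Bstep.IH dm by blast
    have "rauzy_b (Eb F z') = Eb F x" using C4'[OF z'(1) d z'(2)] z'(3) by simp
    moreover have "BB (m@F) (Eb F z')" using z'(1) \<open>F \<noteq> []\<close> by (rule TT_BB.Bstep)
    ultimately show ?thesis by blast
  qed
  obtain z' where z': "TT m z'" "rauzy_t z' = x" using Bstep.IH dm by blast
  have "rauzy_t (Eb F z') = Eb F x" using C3'[OF z'(1) d] z'(2) by simp
  moreover have "BB (m@F) (Eb F z')" using z'(1) \<open>F \<noteq> []\<close> by (rule TT_BB.Bstep)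
  moreover have "Eb F z' \<noteq> tauL (m@F)" using Eb_ne_tau[OF z'(1) d \<open>F \<noteq> []\<close>] .
  ultimately show ?case using rb by blast
qed

lemma ia_decomp: "a \<in> set xs \<Longrightarrow> \<exists>P R. xs = P @ a # R \<and> a \<notin> set P \<and> insert_after a c xs = P @ a # c # R"
proof -
  assume "a \<in> set xs"
  then obtain P R where "xs = P @ a # R" "a \<notin> set P" by (metis split_list_first)
  thus ?thesis by (auto simp: ia_append)
qed

lemma ia_inj: assumes "a \<in> set xs1" "a \<in> set xs2" "insert_after a c1 xs1 = insert_after a c2 xs2"
  shows "xs1 = xs2 \<and> c1 = c2"
proof -
  obtain P1 R1 where 1: "xs1 = P1 @ a # R1" "a \<notin> set P1" "insert_after a c1 xs1 = P1 @ a # c1 # R1"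
    using ia_decomp[OF assms(1)] by blast
  obtain P2 R2 where 2: "xs2 = P2 @ a # R2" "a \<notin> set P2" "insert_after a c2 xs2 = P2 @ a # c2 # R2"
    using ia_decomp[OF assms(2)] by blast
  have e: "P1 @ a # c1 # R1 = P2 @ a # c2 # R2" using 1 2 assms(3) by simp
  have "takeWhile (\<lambda>x. x \<noteq> a) (P1 @ a # c1 # R1) = takeWhile (\<lambda>x. x \<noteq> a) (P2 @ a # c2 # R2)"
    using e by simp
  moreover have "takeWhile (\<lambda>x. x \<noteq> a) P1 = P1" using 1(2) by (induct P1) auto
  moreover have "takeWhile (\<lambda>x. x \<noteq> a) P2 = P2" using 2(2) by (induct P2) auto
  ultimately have P: "P1 = P2" using 1(2) 2(2) by (simp add: takeWhile_tail)
  thus ?thesis using e 1 2 by simp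
qed

definition ok :: "'a lperm \<Rightarrow> bool" where
  "ok x \<longleftrightarrow> snd x \<noteq> [] \<and> last (fst x) \<in> set (butlast (snd x)) \<and> fst x \<noteq> [] \<and> last (snd x) \<in> set (butlast (fst x))"

lemma in_butlast: "x \<in> set b \<Longrightarrow> x \<noteq> last b \<Longrightarrow> x \<in> set (butlast b)"
  by (induct b) auto

lemma nice_ok: "nice m x \<Longrightarrow> ok x"
proof -
  assume n: "nice m x"
  obtain t b where x: "x = (t,b)" by fastforce
  have tb: "t \<noteq> []" "b \<noteq> []" using n x by (auto simp: nice_def)
  have "last t \<in> set b" "last b \<in> set t" using n x tb last_in_set[OF tb(1)] last_in_set[OF tb(2)]
    by (auto simp: nice_def)
  moreover have "last t \<noteq> last b" using n x by (simp add: nice_def)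
  ultimately have "last t \<in> set (butlast b)" "last b \<in> set (butlast t)"
    using in_butlast by metis+
  thus ?thesis using x tb by (simp add: ok_def)
qed

lemma rt_inj: assumes "ok x" "ok y" "rauzy_t x = rauzy_t y" shows "x = y"
proof -
  obtain t1 b1 t2 b2 where x: "x = (t1,b1)" and y: "y = (t2,b2)" by fastforce
  have t: "t1 = t2" using assms(3) x y by (simp add: rt_simp)
  have "butlast b1 = butlast b2 \<and> last b1 = last b2"
    using ia_inj[of "last t1" "butlast b1" "butlast b2" "last b1" "last b2"] assms x y t
    by (simp add: rt_simp ok_def)
  moreover have "b1 \<noteq> []" "b2 \<noteq> []" using assms x y by (auto simp: ok_def)
  ultimately have "b1 = b2" by (metis append_butlast_last_id)
  thus ?thesis using x y t by simp
qed

lemma rb_inj: assumes "ok x" "ok y" "rauzy_b x = rauzy_b y" shows "x = y"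
proof -
  obtain t1 b1 t2 b2 where x: "x = (t1,b1)" and y: "y = (t2,b2)" by fastforce
  have b: "b1 = b2" using assms(3) x y by (simp add: rb_simp)
  have "butlast t1 = butlast t2 \<and> last t1 = last t2"
    using ia_inj[of "last b1" "butlast t1" "butlast t2" "last t1" "last t2"] assms x y b
    by (simp add: rb_simp ok_def)
  moreover have "t1 \<noteq> []" "t2 \<noteq> []" using assms x y by (auto simp: ok_def)
  ultimately have "t1 = t2" by (metis append_butlast_last_id)
  thus ?thesis using x y b by simp
qed



definition goodT :: "'a lperm \<Rightarrow> bool" where
  "goodT p \<longleftrightarrow> (\<exists>W. rauzy_t p \<in> W \<and> p \<notin> W \<and> (\<forall>x\<in>W. rauzy_b x \<in> W \<and> (x \<noteq> rauzy_t p \<longrightarrow> rauzy_t x \<in> W)))"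
definition goodB :: "'a lperm \<Rightarrow> bool" where
  "goodB p \<longleftrightarrow> (\<exists>W. rauzy_b p \<in> W \<and> p \<notin> W \<and> (\<forall>x\<in>W. rauzy_t x \<in> W \<and> (x \<noteq> rauzy_b p \<longrightarrow> rauzy_b x \<in> W)))"

definition Vok :: "'a lperm set \<Rightarrow> bool" where
  "Vok V \<longleftrightarrow> (\<forall>x\<in>V. rauzy_t x \<in> V \<and> rauzy_b x \<in> V \<and> ok x)"

definition ctxT :: "'a lperm set \<Rightarrow> ('a lperm \<Rightarrow> 'a lperm) \<Rightarrow> 'a list \<Rightarrow> bool" where
  "ctxT V \<Phi> m \<longleftrightarrow> inj_on \<Phi> {x. TT m x} \<and> (\<forall>x. TT m x \<longrightarrow> \<Phi> x \<in> V) \<and>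
     (\<forall>x. TT m x \<longrightarrow> rauzy_t (\<Phi> x) = \<Phi> (rauzy_t x)) \<and>
     (\<forall>x. TT m x \<longrightarrow> x \<noteq> tauL m \<longrightarrow> rauzy_b (\<Phi> x) = \<Phi> (rauzy_b x))"
definition ctxB :: "'a lperm set \<Rightarrow> ('a lperm \<Rightarrow> 'a lperm) \<Rightarrow> 'a list \<Rightarrow> bool" where
  "ctxB V \<Phi> m \<longleftrightarrow> inj_on \<Phi> {x. BB m x} \<and> (\<forall>x. BB m x \<longrightarrow> \<Phi> x \<in> V) \<and>
     (\<forall>x. BB m x \<longrightarrow> rauzy_b (\<Phi> x) = \<Phi> (rauzy_b x)) \<and>
     (\<forall>x. BB m x \<longrightarrow> x \<noteq> tauL m \<longrightarrow> rauzy_t (\<Phi> x) = \<Phi> (rauzy_t x))"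

lemma ctxT_inj: "ctxT V \<Phi> m \<Longrightarrow> inj_on \<Phi> {x. TT m x}" unfolding ctxT_def by blast
lemma ctxT_V: "ctxT V \<Phi> m \<Longrightarrow> TT m x \<Longrightarrow> \<Phi> x \<in> V" unfolding ctxT_def by blast
lemma ctxT_rt: "ctxT V \<Phi> m \<Longrightarrow> TT m x \<Longrightarrow> rauzy_t (\<Phi> x) = \<Phi> (rauzy_t x)" unfolding ctxT_def by blast
lemma ctxT_rb: "ctxT V \<Phi> m \<Longrightarrow> TT m x \<Longrightarrow> x \<noteq> tauL m \<Longrightarrow> rauzy_b (\<Phi> x) = \<Phi> (rauzy_b x)" unfolding ctxT_def by blast
lemma ctxB_inj: "ctxB V \<Phi> m \<Longrightarrow> inj_on \<Phi> {x. BB m x}" unfolding ctxB_def by blast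
lemma ctxB_V: "ctxB V \<Phi> m \<Longrightarrow> BB m x \<Longrightarrow> \<Phi> x \<in> V" unfolding ctxB_def by blast
lemma ctxB_rb: "ctxB V \<Phi> m \<Longrightarrow> BB m x \<Longrightarrow> rauzy_b (\<Phi> x) = \<Phi> (rauzy_b x)" unfolding ctxB_def by blast
lemma ctxB_rt: "ctxB V \<Phi> m \<Longrightarrow> BB m x \<Longrightarrow> x \<noteq> tauL m \<Longrightarrow> rauzy_t (\<Phi> x) = \<Phi> (rauzy_t x)" unfolding ctxB_def by blast

lemma Et_inj: "snd x \<noteq> [] \<Longrightarrow> snd y \<noteq> [] \<Longrightarrow> Et F x = Et F y \<Longrightarrow> x = y"
  by (cases x; cases y; auto simp: Et_def list.expand)
lemma Eb_inj: "fst x \<noteq> [] \<Longrightarrow> fst y \<noteq> [] \<Longrightarrow> Eb F x = Eb F y \<Longrightarrow> x = y"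
  by (cases x; cases y; auto simp: Eb_def list.expand)

lemma BB_sndne: "BB m x \<Longrightarrow> distinct m \<Longrightarrow> snd x \<noteq> []"
  using shape(2)[of m x] by (auto simp: nice_def)
lemma TT_fstne: "TT m x \<Longrightarrow> distinct m \<Longrightarrow> fst x \<noteq> []"
  using shape(1)[of m x] by (auto simp: nice_def)

lemma ctx_T_to_B: assumes "ctxT V \<Phi> (F@m)" "distinct (F@m)" "F \<noteq> []"
  shows "ctxB V (\<Phi> \<circ> Et F) m"
proof -
  have dm: "distinct m" using assms(2) by simp
  have sub: "Et F ` {x. BB m x} \<subseteq> {x. TT (F@m) x}" using assms(3) by (auto intro: TT_BB.Tstep)
  have "inj_on (Et F) {x. BB m x}"
  proof (rule inj_onI)
    fix x y assume "x \<in> {x. BB m x}" "y \<in> {x. BB m x}" "Et F x = Et F y"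
    thus "x = y" using Et_inj[of x y F] BB_sndne[OF _ dm] by auto
  qed
  hence inj: "inj_on (\<Phi> \<circ> Et F) {x. BB m x}"
    using ctxT_inj[OF assms(1)] sub by (auto intro: comp_inj_on inj_on_subset)
  show ?thesis unfolding ctxB_def
  proof (intro conjI allI impI)
    show "inj_on (\<Phi> \<circ> Et F) {x. BB m x}" by (rule inj)
  next
    fix x assume x: "BB m x" thus "(\<Phi> \<circ> Et F) x \<in> V" using ctxT_V[OF assms(1) TT_BB.Tstep[OF x assms(3)]] by simp
  next
    fix x assume x: "BB m x"
    have "rauzy_b (\<Phi> (Et F x)) = \<Phi> (rauzy_b (Et F x))"
      using ctxT_rb[OF assms(1) TT_BB.Tstep[OF x assms(3)] Et_ne_tau[OF x assms(2,3)]] .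
    thus "rauzy_b ((\<Phi> \<circ> Et F) x) = (\<Phi> \<circ> Et F) (rauzy_b x)" using C2'[OF x assms(2)] by simp
  next
    fix x assume x: "BB m x" and ne: "x \<noteq> tauL m"
    have "rauzy_t (\<Phi> (Et F x)) = \<Phi> (rauzy_t (Et F x))"
      using ctxT_rt[OF assms(1) TT_BB.Tstep[OF x assms(3)]] .
    thus "rauzy_t ((\<Phi> \<circ> Et F) x) = (\<Phi> \<circ> Et F) (rauzy_t x)" using C1'[OF x assms(2) ne] by simp
  qed
qed

lemma ctx_B_to_T: assumes "ctxB V \<Phi> (m@F)" "distinct (m@F)" "F \<noteq> []"
  shows "ctxT V (\<Phi> \<circ> Eb F) m"
proof -
  have dm: "distinct m" using assms(2) by simp
  have sub: "Eb F ` {x. TT m x} \<subseteq> {x. BB (m@F) x}" using assms(3) by (auto intro: TT_BB.Bstep)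
  have "inj_on (Eb F) {x. TT m x}"
  proof (rule inj_onI)
    fix x y assume "x \<in> {x. TT m x}" "y \<in> {x. TT m x}" "Eb F x = Eb F y"
    thus "x = y" using Eb_inj[of x y F] TT_fstne[OF _ dm] by auto
  qed
  hence inj: "inj_on (\<Phi> \<circ> Eb F) {x. TT m x}"
    using ctxB_inj[OF assms(1)] sub by (auto intro: comp_inj_on inj_on_subset)
  show ?thesis unfolding ctxT_def
  proof (intro conjI allI impI)
    show "inj_on (\<Phi> \<circ> Eb F) {x. TT m x}" by (rule inj)
  next
    fix x assume x: "TT m x" thus "(\<Phi> \<circ> Eb F) x \<in> V" using ctxB_V[OF assms(1) TT_BB.Bstep[OF x assms(3)]] by simp
  next
    fix x assume x: "TT m x"
    have "rauzy_t (\<Phi> (Eb F x)) = \<Phi> (rauzy_t (Eb F x))"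
      using ctxB_rt[OF assms(1) TT_BB.Bstep[OF x assms(3)] Eb_ne_tau[OF x assms(2,3)]] .
    thus "rauzy_t ((\<Phi> \<circ> Eb F) x) = (\<Phi> \<circ> Eb F) (rauzy_t x)" using C3'[OF x assms(2)] by simp
  next
    fix x assume x: "TT m x" and ne: "x \<noteq> tauL m"
    have "rauzy_b (\<Phi> (Eb F x)) = \<Phi> (rauzy_b (Eb F x))"
      using ctxB_rb[OF assms(1) TT_BB.Bstep[OF x assms(3)]] .
    thus "rauzy_b ((\<Phi> \<circ> Eb F) x) = (\<Phi> \<circ> Eb F) (rauzy_b x)" using C4'[OF x assms(2) ne] by simp
  qed
qed


lemma exitT:
  assumes c: "ctxT V \<Phi> m" and d: "distinct m" and m: "m = G @ m1" and G: "G \<noteq> []"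
    and l: "2 \<le> length m1" and p: "TT m \<pi>" and r: "rauzy_t \<pi> = Et G (tauL m1)"
    and nin: "\<pi> \<notin> Et G ` {y. BB m1 y}"
  shows "goodT (\<Phi> \<pi>)"
proof -
  define W where "W = \<Phi> ` Et G ` {y. BB m1 y}"
  have dG: "distinct (G @ m1)" using d m by simp
  have dm1: "distinct m1" using dG by simp
  have TTin: "\<And>y. BB m1 y \<Longrightarrow> TT m (Et G y)" using m G by (auto intro: TT_BB.Tstep)
  have rtp: "rauzy_t (\<Phi> \<pi>) = \<Phi> (Et G (tauL m1))" using ctxT_rt[OF c p] r by simp
  have "rauzy_t (\<Phi> \<pi>) \<in> W" unfolding W_def rtp using TT_BB.Bbase[OF l] by blast
  moreover have "\<Phi> \<pi> \<notin> W"
  proof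
    assume "\<Phi> \<pi> \<in> W"
    then obtain y where y: "BB m1 y" "\<Phi> \<pi> = \<Phi> (Et G y)" unfolding W_def by blast
    have "\<pi> = Et G y" using inj_onD[OF ctxT_inj[OF c] y(2)] p TTin[OF y(1)] by simp
    thus False using nin y(1) by blast
  qed
  moreover have "\<forall>x\<in>W. rauzy_b x \<in> W \<and> (x \<noteq> rauzy_t (\<Phi> \<pi>) \<longrightarrow> rauzy_t x \<in> W)"
  proof
    fix x assume "x \<in> W"
    then obtain y where y: "BB m1 y" and x: "x = \<Phi> (Et G y)" unfolding W_def by blast
    have ne: "Et G y \<noteq> tauL m" using Et_ne_tau[OF y(1) dG G] m by simp
    have "rauzy_b x = \<Phi> (Et G (rauzy_b y))"
      using ctxT_rb[OF c TTin[OF y] ne] C2'[OF y dG] x by simp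
    moreover have "BB m1 (rauzy_b y)" using closure(2)[OF y dm1] by simp
    ultimately have 1: "rauzy_b x \<in> W" unfolding W_def by blast
    have "x \<noteq> rauzy_t (\<Phi> \<pi>) \<longrightarrow> rauzy_t x \<in> W"
    proof
      assume "x \<noteq> rauzy_t (\<Phi> \<pi>)"
      hence yne: "y \<noteq> tauL m1" using x rtp by auto
      have "rauzy_t x = \<Phi> (Et G (rauzy_t y))"
        using ctxT_rt[OF c TTin[OF y]] C1'[OF y dG yne] x by simp
      moreover have "BB m1 (rauzy_t y)" using closure(2)[OF y dm1] yne by simp
      ultimately show "rauzy_t x \<in> W" unfolding W_def by blast
    qed
    with 1 show "rauzy_b x \<in> W \<and> (x \<noteq> rauzy_t (\<Phi> \<pi>) \<longrightarrow> rauzy_t x \<in> W)" by blast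
  qed
  ultimately show ?thesis unfolding goodT_def by blast
qed

lemma exitB:
  assumes c: "ctxB V \<Phi> m" and d: "distinct m" and m: "m = m1 @ G" and G: "G \<noteq> []"
    and l: "2 \<le> length m1" and p: "BB m \<pi>" and r: "rauzy_b \<pi> = Eb G (tauL m1)"
    and nin: "\<pi> \<notin> Eb G ` {y. TT m1 y}"
  shows "goodB (\<Phi> \<pi>)"
proof -
  define W where "W = \<Phi> ` Eb G ` {y. TT m1 y}"
  have dG: "distinct (m1 @ G)" using d m by simp
  have dm1: "distinct m1" using dG by simp
  have BBin: "\<And>y. TT m1 y \<Longrightarrow> BB m (Eb G y)" using m G by (auto intro: TT_BB.Bstep)
  have rbp: "rauzy_b (\<Phi> \<pi>) = \<Phi> (Eb G (tauL m1))" using ctxB_rb[OF c p] r by simp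
  have "rauzy_b (\<Phi> \<pi>) \<in> W" unfolding W_def rbp using TT_BB.Tbase[OF l] by blast
  moreover have "\<Phi> \<pi> \<notin> W"
  proof
    assume "\<Phi> \<pi> \<in> W"
    then obtain y where y: "TT m1 y" "\<Phi> \<pi> = \<Phi> (Eb G y)" unfolding W_def by blast
    have "\<pi> = Eb G y" using inj_onD[OF ctxB_inj[OF c] y(2)] p BBin[OF y(1)] by simp
    thus False using nin y(1) by blast
  qed
  moreover have "\<forall>x\<in>W. rauzy_t x \<in> W \<and> (x \<noteq> rauzy_b (\<Phi> \<pi>) \<longrightarrow> rauzy_b x \<in> W)"
  proof
    fix x assume "x \<in> W"
    then obtain y where y: "TT m1 y" and x: "x = \<Phi> (Eb G y)" unfolding W_def by blast
    have ne: "Eb G y \<noteq> tauL m" using Eb_ne_tau[OF y(1) dG G] m by simp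
    have "rauzy_t x = \<Phi> (Eb G (rauzy_t y))"
      using ctxB_rt[OF c BBin[OF y] ne] C3'[OF y dG] x by simp
    moreover have "TT m1 (rauzy_t y)" using closure(1)[OF y dm1] by simp
    ultimately have 1: "rauzy_t x \<in> W" unfolding W_def by blast
    have "x \<noteq> rauzy_b (\<Phi> \<pi>) \<longrightarrow> rauzy_b x \<in> W"
    proof
      assume "x \<noteq> rauzy_b (\<Phi> \<pi>)"
      hence yne: "y \<noteq> tauL m1" using x rbp by auto
      have "rauzy_b x = \<Phi> (Eb G (rauzy_b y))"
        using ctxB_rb[OF c BBin[OF y]] C4'[OF y dG yne] x by simp
      moreover have "TT m1 (rauzy_b y)" using closure(1)[OF y dm1] yne by simp
      ultimately show "rauzy_b x \<in> W" unfolding W_def by blast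
    qed
    with 1 show "rauzy_t x \<in> W \<and> (x \<noteq> rauzy_b (\<Phi> \<pi>) \<longrightarrow> rauzy_b x \<in> W)" by blast
  qed
  ultimately show ?thesis unfolding goodB_def by blast
qed

lemma Vok_ok: "Vok V \<Longrightarrow> x \<in> V \<Longrightarrow> ok x" by (simp add: Vok_def)
lemma Vok_rt: "Vok V \<Longrightarrow> x \<in> V \<Longrightarrow> rauzy_t x \<in> V" by (simp add: Vok_def)
lemma Vok_rb: "Vok V \<Longrightarrow> x \<in> V \<Longrightarrow> rauzy_b x \<in> V" by (simp add: Vok_def)

lemma entryT:
  assumes v: "Vok V" and c: "ctxT V \<Phi> m" and d: "distinct m" and p: "TT m \<pi>"
    and ne: "\<pi> \<noteq> tauL m" and r: "rauzy_t \<pi> = tauL m"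
  shows "goodT (\<Phi> \<pi>)"
proof -
  define U where "U = \<Phi> ` {y. TT m y \<and> y \<noteq> tauL m}"
  define W where "W = V - U"
  have tT: "TT m (tauL m)" using TT_BB.Tbase[OF TT_len[OF p]] .
  have rtp: "rauzy_t (\<Phi> \<pi>) = \<Phi> (tauL m)" using ctxT_rt[OF c p] r by simp
  have tU: "\<Phi> (tauL m) \<notin> U"
  proof
    assume "\<Phi> (tauL m) \<in> U"
    then obtain y where "TT m y" "y \<noteq> tauL m" "\<Phi> (tauL m) = \<Phi> y" unfolding U_def by blast
    thus False using inj_onD[OF ctxT_inj[OF c]] tT by blast
  qed
  have "rauzy_t (\<Phi> \<pi>) \<in> W" unfolding W_def rtp using tU ctxT_V[OF c tT] by blast
  moreover have "\<Phi> \<pi> \<notin> W" unfolding W_def U_def using p ne by blast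
  moreover have "\<forall>x\<in>W. rauzy_b x \<in> W \<and> (x \<noteq> rauzy_t (\<Phi> \<pi>) \<longrightarrow> rauzy_t x \<in> W)"
  proof
    fix x assume xW: "x \<in> W"
    hence xV: "x \<in> V" and xU: "x \<notin> U" unfolding W_def by auto
    have "rauzy_b x \<notin> U"
    proof
      assume "rauzy_b x \<in> U"
      then obtain y where y: "TT m y" "y \<noteq> tauL m" "rauzy_b x = \<Phi> y" unfolding U_def by blast
      obtain z where z: "TT m z" "z \<noteq> tauL m" "rauzy_b z = y" using preds(1)[OF y(1) d] y(2) by blast
      have "rauzy_b (\<Phi> z) = rauzy_b x" using ctxT_rb[OF c z(1,2)] z(3) y(3) by simp
      hence "\<Phi> z = x" using rb_inj Vok_ok[OF v xV] Vok_ok[OF v ctxT_V[OF c z(1)]] by blast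
      thus False using xU z unfolding U_def by blast
    qed
    hence 1: "rauzy_b x \<in> W" unfolding W_def using Vok_rb[OF v xV] by blast
    have "x \<noteq> rauzy_t (\<Phi> \<pi>) \<longrightarrow> rauzy_t x \<in> W"
    proof
      assume xn: "x \<noteq> rauzy_t (\<Phi> \<pi>)"
      have "rauzy_t x \<notin> U"
      proof
        assume "rauzy_t x \<in> U"
        then obtain y where y: "TT m y" "y \<noteq> tauL m" "rauzy_t x = \<Phi> y" unfolding U_def by blast
        obtain z where z: "TT m z" "rauzy_t z = y" using preds(1)[OF y(1) d] by blast
        have "rauzy_t (\<Phi> z) = rauzy_t x" using ctxT_rt[OF c z(1)] z(2) y(3) by simp
        hence xz: "\<Phi> z = x" using rt_inj Vok_ok[OF v xV] Vok_ok[OF v ctxT_V[OF c z(1)]] by blast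
        show False
        proof (cases "z = tauL m")
          case True thus False using xz xn rtp by simp
        next
          case False thus False using xz xU z(1) unfolding U_def by blast
        qed
      qed
      thus "rauzy_t x \<in> W" unfolding W_def using Vok_rt[OF v xV] by blast
    qed
    with 1 show "rauzy_b x \<in> W \<and> (x \<noteq> rauzy_t (\<Phi> \<pi>) \<longrightarrow> rauzy_t x \<in> W)" by blast
  qed
  ultimately show ?thesis unfolding goodT_def by blast
qed

lemma entryB:
  assumes v: "Vok V" and c: "ctxB V \<Phi> m" and d: "distinct m" and p: "BB m \<pi>"
    and ne: "\<pi> \<noteq> tauL m" and r: "rauzy_b \<pi> = tauL m"
  shows "goodB (\<Phi> \<pi>)"
proof -
  define U where "U = \<Phi> ` {y. BB m y \<and> y \<noteq> tauL m}"
  define W where "W = V - U"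
  have tT: "BB m (tauL m)" using TT_BB.Bbase[OF BB_len[OF p]] .
  have rtp: "rauzy_b (\<Phi> \<pi>) = \<Phi> (tauL m)" using ctxB_rb[OF c p] r by simp
  have tU: "\<Phi> (tauL m) \<notin> U"
  proof
    assume "\<Phi> (tauL m) \<in> U"
    then obtain y where "BB m y" "y \<noteq> tauL m" "\<Phi> (tauL m) = \<Phi> y" unfolding U_def by blast
    thus False using inj_onD[OF ctxB_inj[OF c]] tT by blast
  qed
  have "rauzy_b (\<Phi> \<pi>) \<in> W" unfolding W_def rtp using tU ctxB_V[OF c tT] by blast
  moreover have "\<Phi> \<pi> \<notin> W" unfolding W_def U_def using p ne by blast
  moreover have "\<forall>x\<in>W. rauzy_t x \<in> W \<and> (x \<noteq> rauzy_b (\<Phi> \<pi>) \<longrightarrow> rauzy_b x \<in> W)"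
  proof
    fix x assume xW: "x \<in> W"
    hence xV: "x \<in> V" and xU: "x \<notin> U" unfolding W_def by auto
    have "rauzy_t x \<notin> U"
    proof
      assume "rauzy_t x \<in> U"
      then obtain y where y: "BB m y" "y \<noteq> tauL m" "rauzy_t x = \<Phi> y" unfolding U_def by blast
      obtain z where z: "BB m z" "z \<noteq> tauL m" "rauzy_t z = y" using preds(2)[OF y(1) d] y(2) by blast
      have "rauzy_t (\<Phi> z) = rauzy_t x" using ctxB_rt[OF c z(1,2)] z(3) y(3) by simp
      hence "\<Phi> z = x" using rt_inj Vok_ok[OF v xV] Vok_ok[OF v ctxB_V[OF c z(1)]] by blast
      thus False using xU z unfolding U_def by blast
    qed
    hence 1: "rauzy_t x \<in> W" unfolding W_def using Vok_rt[OF v xV] by blast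
    have "x \<noteq> rauzy_b (\<Phi> \<pi>) \<longrightarrow> rauzy_b x \<in> W"
    proof
      assume xn: "x \<noteq> rauzy_b (\<Phi> \<pi>)"
      have "rauzy_b x \<notin> U"
      proof
        assume "rauzy_b x \<in> U"
        then obtain y where y: "BB m y" "y \<noteq> tauL m" "rauzy_b x = \<Phi> y" unfolding U_def by blast
        obtain z where z: "BB m z" "rauzy_b z = y" using preds(2)[OF y(1) d] by blast
        have "rauzy_b (\<Phi> z) = rauzy_b x" using ctxB_rb[OF c z(1)] z(2) y(3) by simp
        hence xz: "\<Phi> z = x" using rb_inj Vok_ok[OF v xV] Vok_ok[OF v ctxB_V[OF c z(1)]] by blast
        show False
        proof (cases "z = tauL m")
          case True thus False using xz xn rtp by simp
        next
          case False thus False using xz xU z(1) unfolding U_def by blast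
        qed
      qed
      thus "rauzy_b x \<in> W" unfolding W_def using Vok_rb[OF v xV] by blast
    qed
    with 1 show "rauzy_t x \<in> W \<and> (x \<noteq> rauzy_b (\<Phi> \<pi>) \<longrightarrow> rauzy_b x \<in> W)" by blast
  qed
  ultimately show ?thesis unfolding goodB_def by blast
qed



lemma NEQ2T: assumes d: "distinct (F @ h # m1)" and l: "2 \<le> length m1" and y: "BB m1 y"
  shows "Et F (tauL (h # m1)) \<noteq> Et (F@[h]) y"
proof
  assume eq: "Et F (tauL (h # m1)) = Et (F@[h]) y"
  obtain m2 l0 where m1: "m1 = m2 @ [l0]" using l by (cases m1 rule: rev_cases) auto
  have m2: "m2 \<noteq> []" using l m1 by auto
  have "tl (snd (Et F (tauL (h # m1)))) = tl (snd (Et (F@[h]) y))" using eq by simp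
  hence "rev F @ rev m2 @ [h] = h # rev F @ tl (snd y)" using m1 by (simp add: Et_def tauL_def)
  hence "hd (rev F @ rev m2 @ [h]) = h" by simp
  moreover have "hd ((rev F @ rev m2) @ [h]) \<in> set F \<union> set m2"
  proof -
    have ne: "rev F @ rev m2 \<noteq> []" using m2 by simp
    have "hd ((rev F @ rev m2) @ [h]) = hd (rev F @ rev m2)" using ne by (simp add: hd_append)
    also have "\<dots> \<in> set (rev F @ rev m2)" using ne by (rule hd_in_set)
    finally show ?thesis by simp
  qed
  ultimately show False using d m1 by auto
qed

lemma NEQ2B: assumes d: "distinct (m1 @ h # F)" and l: "2 \<le> length m1" and y: "TT m1 y"
  shows "Eb F (tauL (m1 @ [h])) \<noteq> Eb (h # F) y"
proof
  assume eq: "Eb F (tauL (m1 @ [h])) = Eb (h # F) y"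
  obtain m2 f where m1: "m1 = f # m2" using l by (cases m1) auto
  have m2: "m2 \<noteq> []" using l m1 by auto
  have "tl (fst (Eb F (tauL (m1 @ [h])))) = tl (fst (Eb (h # F) y))" using eq by simp
  hence "F @ m2 @ [h] = h # F @ tl (fst y)" using m1 by (simp add: Eb_def tauL_def)
  hence "hd (F @ m2 @ [h]) = h" by simp
  moreover have "hd ((F @ m2) @ [h]) \<in> set F \<union> set m2"
  proof -
    have ne: "F @ m2 \<noteq> []" using m2 by simp
    have "hd ((F @ m2) @ [h]) = hd (F @ m2)" using ne by (simp add: hd_append)
    also have "\<dots> \<in> set (F @ m2)" using ne by (rule hd_in_set)
    finally show ?thesis by simp
  qed
  ultimately show False using d m1 by auto
qed

lemma main:
  assumes v: "Vok V"
  shows "TT m \<pi> \<Longrightarrow> distinct m \<Longrightarrow> \<forall>\<Phi>. ctxT V \<Phi> m \<longrightarrow>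
           (rauzy_t \<pi> \<noteq> \<pi> \<longrightarrow> goodT (\<Phi> \<pi>)) \<and> (\<pi> \<noteq> tauL m \<longrightarrow> rauzy_b \<pi> \<noteq> \<pi> \<longrightarrow> goodB (\<Phi> \<pi>))"
    and "BB m \<pi> \<Longrightarrow> distinct m \<Longrightarrow> \<forall>\<Phi>. ctxB V \<Phi> m \<longrightarrow>
           (rauzy_b \<pi> \<noteq> \<pi> \<longrightarrow> goodB (\<Phi> \<pi>)) \<and> (\<pi> \<noteq> tauL m \<longrightarrow> rauzy_t \<pi> \<noteq> \<pi> \<longrightarrow> goodT (\<Phi> \<pi>))"
proof (induction rule: TT_BB.inducts)
  case (Tbase m)
  show ?case
  proof (intro allI impI conjI)
    fix \<Phi> assume c: "ctxT V \<Phi> m" and ne: "rauzy_t (tauL m) \<noteq> tauL m"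
    obtain h m1 where m: "m = h # m1" "m1 \<noteq> []" using Tbase by (cases m) (auto simp: Suc_le_eq)
    have r: "rauzy_t (tauL m) = Et [h] (tauL m1)"
      using rt_tau[OF m(2), of "[]" h] m Et_Nil_tau[of m] by simp
    have l: "2 \<le> length m1"
    proof (rule ccontr)
      assume "\<not> 2 \<le> length m1"
      then obtain l where "m1 = [l]" using m by (cases m1) (auto simp: Suc_le_eq)
      thus False using ne r m by (simp add: Et_single)
    qed
    show "goodT (\<Phi> (tauL m))"
    proof (rule exitT[OF c Tbase(2) _ _ l TT_BB.Tbase[OF Tbase(1)] r])
      show "m = [h] @ m1" using m by simp
      show "tauL m \<notin> Et [h] ` {y. BB m1 y}"
      proof
        assume "tauL m \<in> Et [h] ` {y. BB m1 y}"
        then obtain y where y: "BB m1 y" "tauL m = Et [h] y" by blast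
        thus False using Et_ne_tau[OF y(1), of "[h]"] Tbase(2) m by auto
      qed
    qed simp
  qed simp
next
  case (Tstep m x F)
  have d: "distinct (F @ m)" by fact
  have dm: "distinct m" using d by simp
  have lm: "2 \<le> length m" using BB_len[OF Tstep(1)] .
  have pT: "TT (F@m) (Et F x)" using Tstep(1) \<open>F \<noteq> []\<close> by (rule TT_BB.Tstep)
  show ?case
  proof (intro allI impI conjI)
    fix \<Phi> assume c: "ctxT V \<Phi> (F @ m)"
    have c': "ctxB V (\<Phi> \<circ> Et F) m" using ctx_T_to_B[OF c d \<open>F \<noteq> []\<close>] .
    have IH: "(rauzy_b x \<noteq> x \<longrightarrow> goodB (\<Phi> (Et F x))) \<and>
              (x \<noteq> tauL m \<longrightarrow> rauzy_t x \<noteq> x \<longrightarrow> goodT (\<Phi> (Et F x)))"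
      using mp[OF spec[OF Tstep.IH[OF dm], of "\<Phi> \<circ> Et F"] c'] by simp
    {
      assume ne: "rauzy_t (Et F x) \<noteq> Et F x"
      show "goodT (\<Phi> (Et F x))"
      proof (cases "x = tauL m")
        case True
        obtain h m1 where m: "m = h # m1" "m1 \<noteq> []" using lm by (cases m) (auto simp: Suc_le_eq)
        have r: "rauzy_t (Et F x) = Et (F@[h]) (tauL m1)" using rt_tau[OF m(2)] True m by simp
        show ?thesis
        proof (cases "2 \<le> length m1")
          case l: True
          show ?thesis
          proof (rule exitT[OF c d _ _ l pT r])
            show "F @ m = (F @ [h]) @ m1" using m by simp
            show "Et F x \<notin> Et (F @ [h]) ` {y. BB m1 y}"
              using NEQ2T[of F h m1] d m l True by auto
          qed simp
        next
          case False
          then obtain l where "m1 = [l]" using m by (cases m1) (auto simp: Suc_le_eq)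
          hence r2: "rauzy_t (Et F x) = tauL (F @ m)" using r m by (simp add: Et_single)
          show ?thesis
            using entryT[OF v c d pT Et_ne_tau[OF Tstep(1) d \<open>F \<noteq> []\<close>] r2] .
        qed
      next
        case False
        have "rauzy_t x \<noteq> x" using ne C1'[OF Tstep(1) d False] by auto
        thus ?thesis using IH False by simp
      qed
    }
    {
      assume ne: "rauzy_b (Et F x) \<noteq> Et F x"
      have "rauzy_b x \<noteq> x" using ne C2'[OF Tstep(1) d] by auto
      thus "goodB (\<Phi> (Et F x))" using IH by simp
    }
  qed
next
  case (Bbase m)
  show ?case
  proof (intro allI impI conjI)
    fix \<Phi> assume c: "ctxB V \<Phi> m" and ne: "rauzy_b (tauL m) \<noteq> tauL m"
    obtain h m1 where m: "m = m1 @ [h]" "m1 \<noteq> []" using Bbase by (cases m rule: rev_cases) (auto simp: Suc_le_eq)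
    have r: "rauzy_b (tauL m) = Eb [h] (tauL m1)"
      using rb_tau[OF m(2), of "[]" h] m Eb_Nil_tau[of m] by simp
    have l: "2 \<le> length m1"
    proof (rule ccontr)
      assume "\<not> 2 \<le> length m1"
      then obtain l where "m1 = [l]" using m by (cases m1) (auto simp: Suc_le_eq)
      thus False using ne r m by (simp add: Eb_single)
    qed
    show "goodB (\<Phi> (tauL m))"
    proof (rule exitB[OF c Bbase(2) _ _ l TT_BB.Bbase[OF Bbase(1)] r])
      show "m = m1 @ [h]" using m by simp
      show "tauL m \<notin> Eb [h] ` {y. TT m1 y}"
      proof
        assume "tauL m \<in> Eb [h] ` {y. TT m1 y}"
        then obtain y where y: "TT m1 y" "tauL m = Eb [h] y" by blast
        thus False using Eb_ne_tau[OF y(1), of "[h]"] Bbase(2) m by auto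
      qed
    qed simp
  qed simp
next
  case (Bstep m x F)
  have d: "distinct (m @ F)" by fact
  have dm: "distinct m" using d by simp
  have lm: "2 \<le> length m" using TT_len[OF Bstep(1)] .
  have pB: "BB (m@F) (Eb F x)" using Bstep(1) \<open>F \<noteq> []\<close> by (rule TT_BB.Bstep)
  show ?case
  proof (intro allI impI conjI)
    fix \<Phi> assume c: "ctxB V \<Phi> (m @ F)"
    have c': "ctxT V (\<Phi> \<circ> Eb F) m" using ctx_B_to_T[OF c d \<open>F \<noteq> []\<close>] .
    have IH: "(rauzy_t x \<noteq> x \<longrightarrow> goodT (\<Phi> (Eb F x))) \<and>
              (x \<noteq> tauL m \<longrightarrow> rauzy_b x \<noteq> x \<longrightarrow> goodB (\<Phi> (Eb F x)))"
      using mp[OF spec[OF Bstep.IH[OF dm], of "\<Phi> \<circ> Eb F"] c'] by simp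
    {
      assume ne: "rauzy_b (Eb F x) \<noteq> Eb F x"
      show "goodB (\<Phi> (Eb F x))"
      proof (cases "x = tauL m")
        case True
        obtain h m1 where m: "m = m1 @ [h]" "m1 \<noteq> []" using lm by (cases m rule: rev_cases) (auto simp: Suc_le_eq)
        have r: "rauzy_b (Eb F x) = Eb (h#F) (tauL m1)" using rb_tau[OF m(2)] True m by simp
        show ?thesis
        proof (cases "2 \<le> length m1")
          case l: True
          show ?thesis
          proof (rule exitB[OF c d _ _ l pB r])
            show "m @ F = m1 @ (h # F)" using m by simp
            show "Eb F x \<notin> Eb (h # F) ` {y. TT m1 y}"
              using NEQ2B[of m1 h F] d m l True by auto
          qed simp
        next
          case False
          then obtain l where "m1 = [l]" using m by (cases m1) (auto simp: Suc_le_eq)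
          hence r2: "rauzy_b (Eb F x) = tauL (m @ F)" using r m by (simp add: Eb_single)
          show ?thesis
            using entryB[OF v c d pB Eb_ne_tau[OF Bstep(1) d \<open>F \<noteq> []\<close>] r2] .
        qed
      next
        case False
        have "rauzy_b x \<noteq> x" using ne C4'[OF Bstep(1) d False] by auto
        thus ?thesis using IH False by simp
      qed
    }
    {
      assume ne: "rauzy_t (Eb F x) \<noteq> Eb F x"
      have "rauzy_t x \<noteq> x" using ne C3'[OF Bstep(1) d] by auto
      thus "goodT (\<Phi> (Eb F x))" using IH by simp
    }
  qed
qed



lemma fst_rt: "fst (rauzy_t p) = fst p" by (cases p) (simp add: rt_simp)
lemma snd_rb: "snd (rauzy_b p) = snd p" by (cases p) (simp add: rb_simp)

lemma walk:
  assumes cp: "closed_path p0 \<gamma>" and e: "e \<in> set \<gamma>" and t: "snd (snd (snd e)) \<in> W" and s: "fst e \<notin> W"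
  shows "\<exists>e'\<in>set \<gamma>. fst e' \<in> W \<and> snd (snd (snd e')) \<notin> W"
proof (rule ccontr)
  assume "\<not> ?thesis"
  hence H: "\<And>e'. e' \<in> set \<gamma> \<Longrightarrow> fst e' \<in> W \<Longrightarrow> snd (snd (snd e')) \<in> W" by blast
  define N where "N = length \<gamma>"
  obtain k where k: "k < N" "\<gamma> ! k = e" using e unfolding N_def by (metis in_set_conv_nth)
  have ne: "\<gamma> \<noteq> []" and cons: "\<And>i. Suc i < N \<Longrightarrow> snd (snd (snd (\<gamma> ! i))) = fst (\<gamma> ! Suc i)"
    and cl: "snd (snd (snd (last \<gamma>))) = fst (hd \<gamma>)"
    using cp unfolding closed_path_def N_def by auto
  have c1: "\<And>i. k \<le> i \<Longrightarrow> i < N \<Longrightarrow> snd (snd (snd (\<gamma> ! i))) \<in> W"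
  proof -
    fix i show "k \<le> i \<Longrightarrow> i < N \<Longrightarrow> snd (snd (snd (\<gamma> ! i))) \<in> W"
    proof (induction i)
      case 0 thus ?case using k t by simp
    next
      case (Suc i)
      show ?case
      proof (cases "k = Suc i")
        case True thus ?thesis using k t by simp
      next
        case False
        hence "snd (snd (snd (\<gamma> ! i))) \<in> W" using Suc by simp
        hence "fst (\<gamma> ! Suc i) \<in> W" using cons Suc.prems by simp
        thus ?thesis using H[of "\<gamma> ! Suc i"] Suc.prems unfolding N_def by simp
      qed
    qed
  qed
  have "snd (snd (snd (\<gamma> ! (N - 1)))) \<in> W" using c1[of "N - 1"] k by simp
  hence "fst (\<gamma> ! 0) \<in> W" using cl ne unfolding N_def by (simp add: last_conv_nth hd_conv_nth)
  have c2: "\<And>i. i < N \<Longrightarrow> fst (\<gamma> ! i) \<in> W"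
  proof -
    fix i show "i < N \<Longrightarrow> fst (\<gamma> ! i) \<in> W"
    proof (induction i)
      case 0 thus ?case using \<open>fst (\<gamma> ! 0) \<in> W\<close> by simp
    next
      case (Suc i)
      hence "fst (\<gamma> ! i) \<in> W" by simp
      hence "snd (snd (snd (\<gamma> ! i))) \<in> W" using H[of "\<gamma> ! i"] Suc.prems unfolding N_def by simp
      thus ?case using cons Suc.prems by simp
    qed
  qed
  show False using c2[OF k(1)] k s by simp
qed

definition ell :: "nat \<Rightarrow> nat list" where "ell n = 0 # [2..<n+1]"

lemma ell_props: "n \<ge> 2 \<Longrightarrow> distinct (ell n) \<and> 2 \<le> length (ell n) \<and> tau n = tauL (ell n)"
  by (auto simp: ell_def tau_def tauL_def)

lemma Vok_top: assumes d: "distinct m" shows "Vok {x. TT m x \<or> BB m x}"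
  unfolding Vok_def
proof
  fix x assume "x \<in> {x. TT m x \<or> BB m x}"
  hence x: "TT m x \<or> BB m x" by simp
  have l: "2 \<le> length m" using x TT_len BB_len by blast
  have tT: "TT m (tauL m)" and tB: "BB m (tauL m)" using l by (auto intro: TT_BB.intros)
  have rt: "rauzy_t x \<in> {x. TT m x \<or> BB m x}"
  proof (cases "TT m x")
    case True thus ?thesis using closure(1)[OF _ d] by blast
  next
    case False
    hence "BB m x" "x \<noteq> tauL m" using x tT by auto
    thus ?thesis using closure(2)[OF _ d] by blast
  qed
  have rb: "rauzy_b x \<in> {x. TT m x \<or> BB m x}"
  proof (cases "BB m x")
    case True thus ?thesis using closure(2)[OF _ d] by blast
  next
    case False
    hence "TT m x" "x \<noteq> tauL m" using x tB by auto
    thus ?thesis using closure(1)[OF _ d] by blast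
  qed
  have "ok x" using x shape[OF _ d] nice_ok by blast
  with rt rb show "rauzy_t x \<in> {x. TT m x \<or> BB m x} \<and> rauzy_b x \<in> {x. TT m x \<or> BB m x} \<and> ok x" by blast
qed

lemma good_top:
  assumes d: "distinct m" and x: "TT m x \<or> BB m x"
  shows "(rauzy_t x \<noteq> x \<longrightarrow> goodT x) \<and> (rauzy_b x \<noteq> x \<longrightarrow> goodB x)"
proof -
  define V where "V = {x. TT m x \<or> BB m x}"
  have v: "Vok V" unfolding V_def by (rule Vok_top[OF d])
  have cT: "ctxT V id m" unfolding ctxT_def V_def by simp
  have cB: "ctxB V id m" unfolding ctxB_def V_def by simp
  have l: "2 \<le> length m" using x TT_len BB_len by blast
  have tT: "TT m (tauL m)" and tB: "BB m (tauL m)" using l by (auto intro: TT_BB.intros)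
  show ?thesis
  proof (cases "TT m x")
    case True
    have 1: "rauzy_t x \<noteq> x \<longrightarrow> goodT x" using mp[OF spec[OF main(1)[OF v True d], of id] cT] by simp
    show ?thesis
    proof (cases "x = tauL m")
      case True
      hence "rauzy_b x \<noteq> x \<longrightarrow> goodB x" using mp[OF spec[OF main(2)[OF v tB d], of id] cB] by simp
      thus ?thesis using 1 by simp
    next
      case False
      hence "rauzy_b x \<noteq> x \<longrightarrow> goodB x" using mp[OF spec[OF main(1)[OF v \<open>TT m x\<close> d], of id] cT] by simp
      thus ?thesis using 1 by simp
    qed
  next
    case False
    hence B: "BB m x" "x \<noteq> tauL m" using x tT by auto
    thus ?thesis using mp[OF spec[OF main(2)[OF v B(1) d], of id] cB] by simp
  qed
qed

lemma vertices_sub: assumes d: "distinct m" and l: "2 \<le> length m"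
  shows "q \<in> rauzy_vertices (tauL m) \<Longrightarrow> TT m q \<or> BB m q"
proof -
  assume "q \<in> rauzy_vertices (tauL m)"
  hence "(\<lambda>x y. y = rauzy_t x \<or> y = rauzy_b x)\<^sup>*\<^sup>* (tauL m) q" by (simp add: rauzy_vertices_def)
  thus ?thesis
  proof (induction rule: rtranclp_induct)
    case base thus ?case using l by (auto intro: TT_BB.intros)
  next
    case (step y z)
    thus ?case using Vok_top[OF d] unfolding Vok_def by blast
  qed
qed

theorem corollary3p1:
  fixes n :: nat and \<gamma> :: "(nat lperm \<times> nat \<times> nat \<times> nat lperm) list"
    and \<pi> \<pi>' :: "nat lperm" and \<alpha> \<beta> :: nat
  assumes "n \<ge> 2"
    and "closed_path (tau n) \<gamma>"
    and "(\<pi>, \<alpha>, \<beta>, \<pi>') \<in> set \<gamma>"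
    and "\<pi> \<noteq> \<pi>'"
  shows "\<exists>\<beta>' \<pi>''. (\<pi>', \<alpha>, \<beta>', \<pi>'') \<in> set \<gamma>"
proof -
  have ep: "distinct (ell n)" "2 \<le> length (ell n)" "tau n = tauL (ell n)" using ell_props[OF assms(1)] by auto
  have sub: "set \<gamma> \<subseteq> rauzy_diagram_edges (tau n)" using assms(2) by (simp add: closed_path_def)
  hence "(\<pi>, \<alpha>, \<beta>, \<pi>') \<in> rauzy_diagram_edges (tau n)" using assms(3) by blast
  hence pv: "\<pi> \<in> rauzy_vertices (tau n)" and re: "rauzy_edge \<pi> \<alpha> \<beta> \<pi>'"
    by (auto simp: rauzy_diagram_edges_def)
  have g: "(rauzy_t \<pi> \<noteq> \<pi> \<longrightarrow> goodT \<pi>) \<and> (rauzy_b \<pi> \<noteq> \<pi> \<longrightarrow> goodB \<pi>)"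
    using good_top[OF ep(1) vertices_sub[OF ep(1,2)]] pv ep(3) by simp
  have edge: "\<And>x a b y. (x, a, b, y) \<in> set \<gamma> \<Longrightarrow> rauzy_edge x a b y"
    using sub by (auto simp: rauzy_diagram_edges_def)
  from re show ?thesis unfolding rauzy_edge_def
  proof (elim disjE conjE)
    assume q: "\<pi>' = rauzy_t \<pi>" and a: "\<alpha> = last (fst \<pi>)"
    then obtain W where W: "rauzy_t \<pi> \<in> W" "\<pi> \<notin> W"
      "\<forall>x\<in>W. rauzy_b x \<in> W \<and> (x \<noteq> rauzy_t \<pi> \<longrightarrow> rauzy_t x \<in> W)"
      using g assms(4) unfolding goodT_def by auto
    obtain e' where e': "e' \<in> set \<gamma>" "fst e' \<in> W" "snd (snd (snd e')) \<notin> W"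
      using walk[OF assms(2,3), of W] W q by auto
    obtain x a' b' y where ee: "e' = (x, a', b', y)" by (cases e') auto
    have r: "rauzy_edge x a' b' y" using edge e'(1) ee by simp
    have xW: "x \<in> W" "y \<notin> W" using e' ee by auto
    have "y = rauzy_t x \<and> a' = last (fst x)"
      using r xW W(3) unfolding rauzy_edge_def by auto
    moreover have "x = rauzy_t \<pi>" using calculation xW W(3) by auto
    ultimately have "(\<pi>', \<alpha>, b', y) \<in> set \<gamma>" using e'(1) ee q a fst_rt[of \<pi>] by simp
    thus ?thesis by blast
  next
    assume q: "\<pi>' = rauzy_b \<pi>" and a: "\<alpha> = last (snd \<pi>)"
    then obtain W where W: "rauzy_b \<pi> \<in> W" "\<pi> \<notin> W"
      "\<forall>x\<in>W. rauzy_t x \<in> W \<and> (x \<noteq> rauzy_b \<pi> \<longrightarrow> rauzy_b x \<in> W)"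
      using g assms(4) unfolding goodB_def by auto
    obtain e' where e': "e' \<in> set \<gamma>" "fst e' \<in> W" "snd (snd (snd e')) \<notin> W"
      using walk[OF assms(2,3), of W] W q by auto
    obtain x a' b' y where ee: "e' = (x, a', b', y)" by (cases e') auto
    have r: "rauzy_edge x a' b' y" using edge e'(1) ee by simp
    have xW: "x \<in> W" "y \<notin> W" using e' ee by auto
    have "y = rauzy_b x \<and> a' = last (snd x)"
      using r xW W(3) unfolding rauzy_edge_def by auto
    moreover have "x = rauzy_b \<pi>" using calculation xW W(3) by auto
    ultimately have "(\<pi>', \<alpha>, b', y) \<in> set \<gamma>" using e'(1) ee q a snd_rb[of \<pi>] by simp
    thus ?thesis by blast
  qed
qed


end
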